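(* Let $\Omega$ be a program with weight constraints, $Z$ a consistent set of literals, and $\Pi_1$ the program consisting of the rules $l\leftarrow\mathit{not}\,\mathit{not}\,l,[C_1],\dots,[C_n]$ for every rule $C_0\leftarrow C_1,\dots,C_n$ of $\Omega$ and every positive head element $l$ of that rule. If $\mathit{cl}(\Omega^Z)$ is consistent then it is the only answer set of the program $\Pi_1^Z$; otherwise $\Pi_1^Z$ has no answer sets.
   Context: A literal is an atom $a$ or $\neg a$; a set of literals is consistent if it contains no pair $a,\neg a$. Formulas are built from literals, $\bot$, $\top$ using $\mathit{not}$, "," (conjunction), ";" (disjunction). For a set $Z$ of literals: $Z\models l$ iff $l\in Z$; $Z\models\top$; $Z\not\models\bot$; $Z\models(F,G)$ iff both; $Z\models(F;G)$ iff at least one; $Z\models\mathit{not}\,F$ iff $Z\not\models F$; $Z$ satisfies a set of rules $\mathit{Head}\leftarrow\mathit{Body}$ if $Z\models\mathit{Body}$ implies $Z\models\mathit{Head}$ for each. Reduct: $F^Z=F$ for $F$ a literal, $\bot$, $\top$; $(F,G)^Z=F^Z,G^Z$; $(F;G)^Z=F^Z;G^Z$; $(\mathit{not}\,F)^Z=\bot$ if $Z\models F$, else $\top$; $\Pi^Z$ applies this to heads and bodies. A consistent set is an answer set of a $\mathit{not}$-free program if it is a minimal consistent set of literals satisfying it. $\langle F_1,\dots,F_n\rangle:X$ is the disjunction over $I\in X$ of the conjunctions of $F_i$, $i\in I$ (empty conjunction $\top$, empty disjunction $\bot$). A rule element is a literal $l$ (positive) or $\mathit{not}\,l$ (negative).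 A weight constraint is $L\le\{c_1=w_1,\dots,c_m=w_m\}\le U$ ($L,U$ reals or $\pm\infty$, $w_i\ge0$); $Z$ satisfies it if $L\le\sum_{j:Z\models c_j}w_j\le U$. A program with weight constraints is a set of rules $C_0\leftarrow C_1,\dots,C_n$; the rule elements of $C_0$ are the head elements. $(L\le S)^Z=L^Z\le S'$, where $S'$ drops the pairs with negative elements and $L^Z$ is $L$ minus the sum of weights of pairs $c=w$ with $c$ negative and $Z\models c$. The reduct of $L_0\le S_0\le U_0\leftarrow L_1\le S_1\le U_1,\dots,L_n\le S_n\le U_n$ is, if $Z$ satisfies $S_i\le U_i$ for all $1\le i\le n$, the set of rules $l\leftarrow(L_1\le S_1)^Z,\dots,(L_n\le S_n)^Z$ for all positive head elements $l$ with $l\in Z$; otherwise empty. $\Omega^Z$ is the union of the reducts of its rules; a set of literals satisfies $\Omega^Z$ if for each rule whose body constraints it satisfies it contains the head literal. $\mathit{cl}(\Omega^Z)$ (the deductive closure) is the unique minimal set of literals satisfying $\Omega^Z$. Translation: $[w\le S]=\langle c_1,\dots,c_m\rangle:\{I: w\le\sum_{i\in I}w_i\}$, $[w<S]=\langle c_1,\dots,c_m\rangle:\{I: w<\sum_{i\in I}w_i\}$, $[S\le U]=\mathit{not}\,[U<S]$, $[L\le S\le U]=[L\le S],[S\le U]$. *)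

theory Defs
  imports Complex_Main "HOL-Library.Extended_Real"
begin

datatype 'a lit = Atom 'a | NegAtom 'a

definition consistent :: "'a lit set \<Rightarrow> bool" where
  "consistent Z \<longleftrightarrow> (\<forall>a. \<not> (Atom a \<in> Z \<and> NegAtom a \<in> Z))"

datatype 'a fml = FLit "'a lit" | FBot | FTop | FNot "'a fml"
  | FAnd "'a fml" "'a fml" | FOr "'a fml" "'a fml"

fun fsat :: "'a lit set \<Rightarrow> 'a fml \<Rightarrow> bool" where
  "fsat Z (FLit l) = (l \<in> Z)"
| "fsat Z FBot = False"
| "fsat Z FTop = True"
| "fsat Z (FNot F) = (\<not> fsat Z F)"
| "fsat Z (FAnd F G) = (fsat Z F \<and> fsat Z G)"
| "fsat Z (FOr F G) = (fsat Z F \<or> fsat Z G)"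

fun freduct :: "'a lit set \<Rightarrow> 'a fml \<Rightarrow> 'a fml" where
  "freduct Z (FLit l) = FLit l"
| "freduct Z FBot = FBot"
| "freduct Z FTop = FTop"
| "freduct Z (FNot F) = (if fsat Z F then FBot else FTop)"
| "freduct Z (FAnd F G) = FAnd (freduct Z F) (freduct Z G)"
| "freduct Z (FOr F G) = FOr (freduct Z F) (freduct Z G)"

text \<open>A rule Head <- Body is a pair (Head, Body); a program is a set of rules.\<close>
type_synonym 'a frule = "'a fml \<times> 'a fml"

definition psat :: "'a lit set \<Rightarrow> 'a frule set \<Rightarrow> bool" where
  "psat Z P \<longleftrightarrow> (\<forall>(h, b) \<in> P. fsat Z b \<longrightarrow> fsat Z h)"

definition preduct :: "'a lit set \<Rightarrow> 'a frule set \<Rightarrow> 'a frule set" where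
  "preduct Z P = (\<lambda>(h, b). (freduct Z h, freduct Z b)) ` P"

definition answer_set_nf :: "'a frule set \<Rightarrow> 'a lit set \<Rightarrow> bool" where
  "answer_set_nf P Z \<longleftrightarrow> consistent Z \<and> psat Z P \<and>
     (\<forall>Y. consistent Y \<and> psat Y P \<and> Y \<subseteq> Z \<longrightarrow> Y = Z)"

fun bigand :: "'a fml list \<Rightarrow> 'a fml" where
  "bigand [] = FTop"
| "bigand [F] = F"
| "bigand (F # G # Fs) = FAnd F (bigand (G # Fs))"

fun bigor :: "'a fml list \<Rightarrow> 'a fml" where
  "bigor [] = FBot"
| "bigor [F] = F"
| "bigor (F # G # Fs) = FOr F (bigor (G # Fs))"

text \<open>Indices are 0-based; an index set I is an increasing list of indices.\<close>
definition indexed :: "'a fml list \<Rightarrow> nat list list \<Rightarrow> 'a fml" where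
  "indexed Fs X = bigor (map (\<lambda>I. bigand (map (\<lambda>i. Fs ! i) I)) X)"

datatype 'a elem = PosE "'a lit" | NegE "'a lit"

fun elem_fml :: "'a elem \<Rightarrow> 'a fml" where
  "elem_fml (PosE l) = FLit l"
| "elem_fml (NegE l) = FNot (FLit l)"

text \<open>WC L S U stands for L <= {c1=w1,...,cm=wm} <= U.\<close>
datatype 'a wc = WC ereal "('a elem \<times> real) list" ereal

type_synonym 'a wrule = "'a wc \<times> 'a wc list"   (* C0 <- C1,...,Cn *)

definition wsum :: "'a lit set \<Rightarrow> ('a elem \<times> real) list \<Rightarrow> real" where
  "wsum Z S = sum_list (map snd (filter (\<lambda>(c, w). fsat Z (elem_fml c)) S))"

fun wc_sat :: "'a lit set \<Rightarrow> 'a wc \<Rightarrow> bool" where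
  "wc_sat Z (WC L S U) = (L \<le> ereal (wsum Z S) \<and> ereal (wsum Z S) \<le> U)"

fun wc_nonneg :: "'a wc \<Rightarrow> bool" where
  "wc_nonneg (WC L S U) = (\<forall>(c, w) \<in> set S. 0 \<le> w)"

definition wprog_nonneg :: "'a wrule set \<Rightarrow> bool" where
  "wprog_nonneg \<Omega> \<longleftrightarrow> (\<forall>(C0, Cs) \<in> \<Omega>. wc_nonneg C0 \<and> (\<forall>C \<in> set Cs. wc_nonneg C))"

fun pos_heads :: "'a wc \<Rightarrow> 'a lit set" where
  "pos_heads (WC L S U) = {l. \<exists>w. (PosE l, w) \<in> set S}"

text \<open>Reduced constraint (L^Z <= S'): lower bound and the positive pairs.\<close>
type_synonym 'a rwc = "ereal \<times> ('a lit \<times> real) list"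
type_synonym 'a rrule = "'a lit \<times> 'a rwc list"

definition pos_part :: "('a elem \<times> real) list \<Rightarrow> ('a lit \<times> real) list" where
  "pos_part S = concat (map (\<lambda>(c, w). case c of PosE l \<Rightarrow> [(l, w)] | NegE _ \<Rightarrow> []) S)"

definition neg_part :: "('a elem \<times> real) list \<Rightarrow> ('a elem \<times> real) list" where
  "neg_part S = filter (\<lambda>(c, w). case c of PosE _ \<Rightarrow> False | NegE _ \<Rightarrow> True) S"

fun wc_reduct :: "'a lit set \<Rightarrow> 'a wc \<Rightarrow> 'a rwc" where
  "wc_reduct Z (WC L S U) = (L - ereal (wsum Z (neg_part S)), pos_part S)"

fun upper_ok :: "'a lit set \<Rightarrow> 'a wc \<Rightarrow> bool" where
  "upper_ok Z (WC L S U) = (ereal (wsum Z S) \<le> U)"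

fun wrule_reduct :: "'a lit set \<Rightarrow> 'a wrule \<Rightarrow> 'a rrule set" where
  "wrule_reduct Z (C0, Cs) =
     (if (\<forall>C \<in> set Cs. upper_ok Z C)
      then {(l, map (wc_reduct Z) Cs) | l. l \<in> pos_heads C0 \<and> l \<in> Z}
      else {})"

definition wprog_reduct :: "'a lit set \<Rightarrow> 'a wrule set \<Rightarrow> 'a rrule set" where
  "wprog_reduct Z \<Omega> = (\<Union>r \<in> \<Omega>. wrule_reduct Z r)"

fun rwc_sat :: "'a lit set \<Rightarrow> 'a rwc \<Rightarrow> bool" where
  "rwc_sat X (L, S) = (L \<le> ereal (sum_list (map snd (filter (\<lambda>(l, w). l \<in> X) S))))"

definition rsat :: "'a lit set \<Rightarrow> 'a rrule set \<Rightarrow> bool" where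
  "rsat X R \<longleftrightarrow> (\<forall>(l, Bs) \<in> R. (\<forall>B \<in> set Bs. rwc_sat X B) \<longrightarrow> l \<in> X)"

definition cl :: "'a rrule set \<Rightarrow> 'a lit set" where
  "cl R = (THE X. rsat X R \<and> (\<forall>Y. rsat Y R \<and> Y \<subseteq> X \<longrightarrow> Y = X))"

definition tr_ge :: "ereal \<Rightarrow> ('a elem \<times> real) list \<Rightarrow> 'a fml" where
  "tr_ge w S = indexed (map (elem_fml \<circ> fst) S)
     (filter (\<lambda>I. w \<le> ereal (sum_list (map (\<lambda>i. snd (S ! i)) I))) (subseqs [0..<length S]))"

definition tr_gt :: "ereal \<Rightarrow> ('a elem \<times> real) list \<Rightarrow> 'a fml" where
  "tr_gt w S = indexed (map (elem_fml \<circ> fst) S)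
     (filter (\<lambda>I. w < ereal (sum_list (map (\<lambda>i. snd (S ! i)) I))) (subseqs [0..<length S]))"

fun tr :: "'a wc \<Rightarrow> 'a fml" where
  "tr (WC L S U) = FAnd (tr_ge L S) (FNot (tr_gt U S))"

definition Pi1 :: "'a wrule set \<Rightarrow> 'a frule set" where
  "Pi1 \<Omega> = {(FLit l, bigand (FNot (FNot (FLit l)) # map tr Cs)) | l C0 Cs.
               (C0, Cs) \<in> \<Omega> \<and> l \<in> pos_heads C0}"

end

theory Submission
  imports Defs
begin

lemma fsat_bigand: "fsat X (bigand Fs) \<longleftrightarrow> (\<forall>F\<in>set Fs. fsat X F)"
  by (induction Fs rule: bigand.induct) auto

lemma fsat_bigor: "fsat X (bigor Fs) \<longleftrightarrow> (\<exists>F\<in>set Fs. fsat X F)"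
  by (induction Fs rule: bigor.induct) auto

lemma freduct_bigand: "freduct Z (bigand Fs) = bigand (map (freduct Z) Fs)"
  by (induction Fs rule: bigand.induct) auto

lemma freduct_bigor: "freduct Z (bigor Fs) = bigor (map (freduct Z) Fs)"
  by (induction Fs rule: bigor.induct) auto

lemma fsat_indexed: "fsat X (indexed Fs Is) \<longleftrightarrow> (\<exists>I\<in>set Is. \<forall>i\<in>set I. fsat X (Fs ! i))"
  unfolding indexed_def by (simp add: fsat_bigor fsat_bigand)

lemma fsat_freduct_indexed:
  "fsat X (freduct Z (indexed Fs Is)) \<longleftrightarrow> (\<exists>I\<in>set Is. \<forall>i\<in>set I. fsat X (freduct Z (Fs ! i)))"
  unfolding indexed_def by (simp add: freduct_bigor freduct_bigand fsat_bigor fsat_bigand)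

lemma filter_in_subseqs: "filter Q xs \<in> set (subseqs xs)"
  by (induction xs) (auto simp: Let_def)

lemma subseqs_set: "I \<in> set (subseqs xs) \<Longrightarrow> set I \<subseteq> set xs"
  by (induction xs arbitrary: I) (auto simp: Let_def, blast+)

lemma subseqs_sum_le:
  fixes g :: "nat \<Rightarrow> real"
  assumes "I \<in> set (subseqs xs)" "\<forall>i\<in>set I. Q i" "\<forall>i\<in>set xs. 0 \<le> g i"
  shows "sum_list (map g I) \<le> sum_list (map g (filter Q xs))"
  using assms
proof (induction xs arbitrary: I)
  case Nil
  then show ?case by simp
next
  case (Cons x xs)
  from Cons.prems(1) have "(\<exists>I'. I = x # I' \<and> I' \<in> set (subseqs xs)) \<or> I \<in> set (subseqs xs)"
    by (auto simp: Let_def)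
  then show ?case
  proof
    assume "\<exists>I'. I = x # I' \<and> I' \<in> set (subseqs xs)"
    then obtain I' where I': "I = x # I'" "I' \<in> set (subseqs xs)" by blast
    have "sum_list (map g I') \<le> sum_list (map g (filter Q xs))"
      using Cons.IH[OF I'(2)] Cons.prems I' by auto
    then show ?thesis using I' Cons.prems by auto
  next
    assume h: "I \<in> set (subseqs xs)"
    have "sum_list (map g I) \<le> sum_list (map g (filter Q xs))"
      using Cons.IH[OF h] Cons.prems by auto
    then show ?thesis using Cons.prems by auto
  qed
qed

lemma subseqs_exists:
  fixes g :: "nat \<Rightarrow> real"
  assumes up: "\<And>a b. \<theta> a \<Longrightarrow> a \<le> b \<Longrightarrow> \<theta> b" and nn: "\<forall>i\<in>set xs. 0 \<le> g i"
  shows "(\<exists>I\<in>set (subseqs xs). \<theta> (sum_list (map g I)) \<and> (\<forall>i\<in>set I. Q i))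
     \<longleftrightarrow> \<theta> (sum_list (map g (filter Q xs)))"
proof
  assume "\<exists>I\<in>set (subseqs xs). \<theta> (sum_list (map g I)) \<and> (\<forall>i\<in>set I. Q i)"
  then obtain I where "I \<in> set (subseqs xs)" "\<theta> (sum_list (map g I))" "\<forall>i\<in>set I. Q i" by blast
  then show "\<theta> (sum_list (map g (filter Q xs)))"
    using up subseqs_sum_le[of I xs Q g] nn by blast
next
  assume "\<theta> (sum_list (map g (filter Q xs)))"
  then show "\<exists>I\<in>set (subseqs xs). \<theta> (sum_list (map g I)) \<and> (\<forall>i\<in>set I. Q i)"
    using filter_in_subseqs[of Q xs] by (intro bexI[of _ "filter Q xs"]) auto
qed

lemma filter_idx_sum:
  "sum_list (map (\<lambda>i. snd (S ! i)) (filter (\<lambda>i. R (fst (S ! i))) [0..<length S]))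
   = sum_list (map snd (filter (\<lambda>(c, w). R c) S))"
proof -
  have "map (\<lambda>i. S ! i) (filter (\<lambda>i. R (fst (S ! i))) [0..<length S])
        = filter (\<lambda>(c, w). R c) (map (\<lambda>i. S ! i) [0..<length S])"
    by (simp add: filter_map comp_def case_prod_beta)
  also have "map (\<lambda>i. S ! i) [0..<length S] = S" by (rule map_nth)
  finally have "map (\<lambda>i. S ! i) (filter (\<lambda>i. R (fst (S ! i))) [0..<length S]) = filter (\<lambda>(c, w). R c) S" .
  then have "map snd (map (\<lambda>i. S ! i) (filter (\<lambda>i. R (fst (S ! i))) [0..<length S])) = map snd (filter (\<lambda>(c, w). R c) S)"
    by simp
  then show ?thesis by (simp add: comp_def)
qed

lemma tr_general:
  fixes S :: "('a elem \<times> real) list"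
  assumes up: "\<And>a b. \<theta> a \<Longrightarrow> a \<le> b \<Longrightarrow> \<theta> b" and nn: "\<forall>(c, w)\<in>set S. 0 \<le> w"
  shows "(\<exists>I\<in>set (filter (\<lambda>I. \<theta> (sum_list (map (\<lambda>i. snd (S ! i)) I))) (subseqs [0..<length S])).
            \<forall>i\<in>set I. P ((map (elem_fml \<circ> fst) S) ! i))
     \<longleftrightarrow> \<theta> (sum_list (map snd (filter (\<lambda>(c, w). P (elem_fml c)) S)))"
proof -
  have nn': "\<forall>i\<in>set [0..<length S]. 0 \<le> snd (S ! i)"
    using nn by (auto dest!: nth_mem simp: case_prod_beta)
  have "(\<exists>I\<in>set (filter (\<lambda>I. \<theta> (sum_list (map (\<lambda>i. snd (S ! i)) I))) (subseqs [0..<length S])).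
            \<forall>i\<in>set I. P ((map (elem_fml \<circ> fst) S) ! i))
     \<longleftrightarrow> (\<exists>I\<in>set (subseqs [0..<length S]). \<theta> (sum_list (map (\<lambda>i. snd (S ! i)) I)) \<and>
            (\<forall>i\<in>set I. P (elem_fml (fst (S ! i)))))"
  proof -
    have "\<And>I. I \<in> set (subseqs [0..<length S]) \<Longrightarrow>
       (\<forall>i\<in>set I. P ((map (elem_fml \<circ> fst) S) ! i)) = (\<forall>i\<in>set I. P (elem_fml (fst (S ! i))))"
      using subseqs_set by fastforce
    then show ?thesis by auto
  qed
  also have "\<dots> \<longleftrightarrow> \<theta> (sum_list (map (\<lambda>i. snd (S ! i)) (filter (\<lambda>i. P (elem_fml (fst (S ! i)))) [0..<length S])))"
    by (rule subseqs_exists[OF up nn'])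
  also have "\<dots> \<longleftrightarrow> \<theta> (sum_list (map snd (filter (\<lambda>(c, w). P (elem_fml c)) S)))"
    by (subst filter_idx_sum[of S "\<lambda>c. P (elem_fml c)"]) simp
  finally show ?thesis .
qed

lemma tr_gt_sat:
  assumes "\<forall>(c, w)\<in>set S. 0 \<le> w"
  shows "fsat Z (tr_gt U S) \<longleftrightarrow> U < ereal (wsum Z S)"
  unfolding tr_gt_def fsat_indexed wsum_def
  by (rule tr_general[OF _ assms]) (meson ereal_less_le ereal_less_eq(3) less_le_trans)

lemma split_sum:
  "sum_list (map snd (filter (\<lambda>(c, w). fsat X (freduct Z (elem_fml c))) S))
   = sum_list (map snd (filter (\<lambda>(l, w). l \<in> X) (pos_part S))) + wsum Z (neg_part S)"
proof (induction S)
  case Nil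
  then show ?case by (simp add: pos_part_def neg_part_def wsum_def)
next
  case (Cons p S)
  obtain c w where p: "p = (c, w)" by fastforce
  show ?case using Cons by (cases c) (auto simp: p pos_part_def neg_part_def wsum_def)
qed

lemma ereal_shift: "L \<le> ereal (a + b) \<longleftrightarrow> L - ereal b \<le> ereal a"
  by (cases L) auto

lemma tr_ge_sat:
  assumes "\<forall>(c, w)\<in>set S. 0 \<le> w"
  shows "fsat X (freduct Z (tr_ge L S)) \<longleftrightarrow> rwc_sat X (wc_reduct Z (WC L S U))"
proof -
  have "fsat X (freduct Z (tr_ge L S)) \<longleftrightarrow>
     L \<le> ereal (sum_list (map snd (filter (\<lambda>(c, w). fsat X (freduct Z (elem_fml c))) S)))"
    unfolding tr_ge_def fsat_freduct_indexed
    by (rule tr_general[OF _ assms]) (meson ereal_less_eq(3) order_trans)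
  then show ?thesis by (simp add: split_sum ereal_shift)
qed

lemma tr_sat:
  assumes "wc_nonneg C"
  shows "fsat X (freduct Z (tr C)) \<longleftrightarrow> upper_ok Z C \<and> rwc_sat X (wc_reduct Z C)"
proof (cases C)
  case (WC L S U)
  have nn: "\<forall>(c, w)\<in>set S. 0 \<le> w" using assms WC by simp
  show ?thesis using tr_gt_sat[OF nn, of Z U] tr_ge_sat[OF nn, of X Z L U] WC
    by (auto simp: not_less)
qed

lemma psat_iff:
  assumes "wprog_nonneg \<Omega>"
  shows "psat X (preduct Z (Pi1 \<Omega>)) \<longleftrightarrow> rsat X (wprog_reduct Z \<Omega>)"
proof -
  have body: "fsat X (freduct Z (bigand (FNot (FNot (FLit l)) # map tr Cs))) \<longleftrightarrow>
      l \<in> Z \<and> (\<forall>C\<in>set Cs. upper_ok Z C) \<and> (\<forall>C\<in>set Cs. rwc_sat X (wc_reduct Z C))"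
    if "(C0, Cs) \<in> \<Omega>" for l C0 Cs
  proof -
    have "\<forall>C\<in>set Cs. wc_nonneg C" using assms that unfolding wprog_nonneg_def by blast
    then show ?thesis using tr_sat
      by (simp add: freduct_bigand fsat_bigand) blast
  qed
  show ?thesis
  proof
    assume h: "psat X (preduct Z (Pi1 \<Omega>))"
    show "rsat X (wprog_reduct Z \<Omega>)"
      unfolding rsat_def wprog_reduct_def
    proof (clarify)
      fix l Bs C0 Cs
      assume r: "(C0, Cs) \<in> \<Omega>" and lb: "(l, Bs) \<in> wrule_reduct Z (C0, Cs)"
        and bs: "\<forall>B\<in>set Bs. rwc_sat X B"
      from lb have u: "\<forall>C \<in> set Cs. upper_ok Z C" and l: "l \<in> pos_heads C0" "l \<in> Z"
        and Bs: "Bs = map (wc_reduct Z) Cs"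
        by (auto split: if_splits)
      have "(FLit l, bigand (FNot (FNot (FLit l)) # map tr Cs)) \<in> Pi1 \<Omega>"
        unfolding Pi1_def using r l by blast
      then have "(FLit l, freduct Z (bigand (FNot (FNot (FLit l)) # map tr Cs))) \<in> preduct Z (Pi1 \<Omega>)"
        unfolding preduct_def by force
      moreover have "fsat X (freduct Z (bigand (FNot (FNot (FLit l)) # map tr Cs)))"
        using body[OF r] u l bs Bs by auto
      ultimately show "l \<in> X" using h unfolding psat_def by fastforce
    qed
  next
    assume h: "rsat X (wprog_reduct Z \<Omega>)"
    show "psat X (preduct Z (Pi1 \<Omega>))"
      unfolding psat_def preduct_def Pi1_def
    proof (clarify)
      fix l C0 Cs
      assume r: "(C0, Cs) \<in> \<Omega>" and l: "l \<in> pos_heads C0"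
        and b: "fsat X (freduct Z (bigand (FNot (FNot (FLit l)) # map tr Cs)))"
      from body[OF r] b have lz: "l \<in> Z" and u: "\<forall>C\<in>set Cs. upper_ok Z C"
        and s: "\<forall>C\<in>set Cs. rwc_sat X (wc_reduct Z C)" by auto
      have "(l, map (wc_reduct Z) Cs) \<in> wrule_reduct Z (C0, Cs)"
        using l lz u by simp
      then have "(l, map (wc_reduct Z) Cs) \<in> wprog_reduct Z \<Omega>"
        unfolding wprog_reduct_def using r by blast
      moreover have "\<forall>B\<in>set (map (wc_reduct Z) Cs). rwc_sat X B" using s by simp
      ultimately show "fsat X (freduct Z (FLit l))" using h unfolding rsat_def by fastforce
    qed
  qed
qed

definition rnonneg :: "'a rrule set \<Rightarrow> bool" where
  "rnonneg R \<longleftrightarrow> (\<forall>(l, Bs)\<in>R. \<forall>(L, S)\<in>set Bs. \<forall>(l', w)\<in>set S. 0 \<le> w)"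

lemma pos_part_nonneg: "\<forall>(c, w)\<in>set S. 0 \<le> w \<Longrightarrow> (l, w) \<in> set (pos_part S) \<Longrightarrow> 0 \<le> w"
  unfolding pos_part_def by (auto split: elem.splits)

lemma reduct_nonneg:
  assumes "wprog_nonneg \<Omega>" shows "rnonneg (wprog_reduct Z \<Omega>)"
  unfolding rnonneg_def wprog_reduct_def
proof (clarify)
  fix l Bs C0 Cs L S l' w
  assume r: "(C0, Cs) \<in> \<Omega>" and lb: "(l, Bs) \<in> wrule_reduct Z (C0, Cs)"
    and LS: "(L, S) \<in> set Bs" and lw: "(l', w) \<in> set S"
  from lb have Bs: "Bs = map (wc_reduct Z) Cs" by (auto split: if_splits)
  then obtain C where C: "C \<in> set Cs" "wc_reduct Z C = (L, S)" using LS by auto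
  have nn: "wc_nonneg C" using assms r C unfolding wprog_nonneg_def by blast
  obtain L0 S0 U0 where CC: "C = WC L0 S0 U0" by (cases C)
  have "S = pos_part S0" using C CC by simp
  then show "0 \<le> w" using pos_part_nonneg[of S0 l' w] nn CC lw by simp
qed

lemma sum_mono_set:
  assumes "X \<subseteq> Y" "\<forall>(l, w)\<in>set S. 0 \<le> (w::real)"
  shows "sum_list (map snd (filter (\<lambda>(l, w). l \<in> X) S)) \<le> sum_list (map snd (filter (\<lambda>(l, w). l \<in> Y) S))"
  using assms by (induction S) auto

lemma rwc_mono:
  assumes "X \<subseteq> Y" "\<forall>(l, w)\<in>set (snd B). 0 \<le> w" "rwc_sat X B"
  shows "rwc_sat Y B"
proof -
  obtain L S where B: "B = (L, S)" by fastforce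
  show ?thesis using assms sum_mono_set[of X Y S] B by (auto intro: order_trans)
qed

lemma cl_least:
  assumes "rnonneg R"
  shows "rsat (cl R) R" "\<And>X. rsat X R \<Longrightarrow> cl R \<subseteq> X"
proof -
  define M where "M = \<Inter>{X. rsat X R}"
  have Mmod: "rsat M R"
    unfolding rsat_def
  proof (clarify)
    fix l Bs
    assume lb: "(l, Bs) \<in> R" and bs: "\<forall>B\<in>set Bs. rwc_sat M B"
    show "l \<in> M" unfolding M_def
    proof
      fix X assume X: "X \<in> {X. rsat X R}"
      have "M \<subseteq> X" unfolding M_def using X by blast
      moreover have "\<forall>B\<in>set Bs. \<forall>(l, w)\<in>set (snd B). 0 \<le> w"
        using assms lb unfolding rnonneg_def by fastforce
      ultimately have "\<forall>B\<in>set Bs. rwc_sat X B" using bs rwc_mono by blast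
      then show "l \<in> X" using X lb unfolding rsat_def by auto
    qed
  qed
  have Mleast: "\<And>X. rsat X R \<Longrightarrow> M \<subseteq> X" unfolding M_def by blast
  have "cl R = M"
    unfolding cl_def
  proof (rule the_equality)
    show "rsat M R \<and> (\<forall>Y. rsat Y R \<and> Y \<subseteq> M \<longrightarrow> Y = M)" using Mmod Mleast by blast
  next
    fix X assume "rsat X R \<and> (\<forall>Y. rsat Y R \<and> Y \<subseteq> X \<longrightarrow> Y = X)"
    then show "X = M" using Mmod Mleast by blast
  qed
  then show "rsat (cl R) R" "\<And>X. rsat X R \<Longrightarrow> cl R \<subseteq> X" using Mmod Mleast by auto
qed

lemma consistent_subset: "consistent Y \<Longrightarrow> X \<subseteq> Y \<Longrightarrow> consistent X"
  unfolding consistent_def by blast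

theorem lemma7:
  fixes \<Omega> :: "'a wrule set" and Z :: "'a lit set"
  assumes "wprog_nonneg \<Omega>"
    and "consistent Z"
  shows "(consistent (cl (wprog_reduct Z \<Omega>)) \<longrightarrow>
            {X. answer_set_nf (preduct Z (Pi1 \<Omega>)) X} = {cl (wprog_reduct Z \<Omega>)})
       \<and> (\<not> consistent (cl (wprog_reduct Z \<Omega>)) \<longrightarrow>
            {X. answer_set_nf (preduct Z (Pi1 \<Omega>)) X} = {})"
proof -
  let ?R = "wprog_reduct Z \<Omega>"
  let ?P = "preduct Z (Pi1 \<Omega>)"
  have iff: "\<And>X. psat X ?P \<longleftrightarrow> rsat X ?R" using psat_iff[OF assms(1)] by blast
  have nn: "rnonneg ?R" using reduct_nonneg[OF assms(1)] .
  note M = cl_least[OF nn]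
  show ?thesis
  proof (intro conjI impI)
    assume c: "consistent (cl ?R)"
    show "{X. answer_set_nf ?P X} = {cl ?R}"
    proof (intro set_eqI iffI)
      fix X assume "X \<in> {X. answer_set_nf ?P X}"
      then have X: "consistent X" "psat X ?P" "\<forall>Y. consistent Y \<and> psat Y ?P \<and> Y \<subseteq> X \<longrightarrow> Y = X"
        unfolding answer_set_nf_def by auto
      have "cl ?R \<subseteq> X" using M(2) X(2) iff by blast
      moreover have "psat (cl ?R) ?P" using M(1) iff by blast
      ultimately have "cl ?R = X" using X(3) c by blast
      then show "X \<in> {cl ?R}" by simp
    next
      fix X assume "X \<in> {cl ?R}"
      then have X: "X = cl ?R" by simp
      have "psat X ?P" using M(1) iff X by blast
      moreover have "\<forall>Y. consistent Y \<and> psat Y ?P \<and> Y \<subseteq> X \<longrightarrow> Y = X"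
      proof (intro allI impI)
        fix Y assume "consistent Y \<and> psat Y ?P \<and> Y \<subseteq> X"
        then have "rsat Y ?R" "Y \<subseteq> X" using iff by auto
        then show "Y = X" using M(2)[of Y] X by blast
      qed
      ultimately show "X \<in> {X. answer_set_nf ?P X}"
        unfolding answer_set_nf_def using c X by blast
    qed
  next
    assume c: "\<not> consistent (cl ?R)"
    have "\<not> answer_set_nf ?P X" for X
    proof
      assume "answer_set_nf ?P X"
      then have "consistent X" "psat X ?P" unfolding answer_set_nf_def by auto
      then have "cl ?R \<subseteq> X" "consistent X" using M(2) iff by blast+
      then show False using c consistent_subset by blast
    qed
    then show "{X. answer_set_nf ?P X} = {}" by blast
  qed
qed

end
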